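(* Let $\beta>0$, $\gamma\in[1,\infty)$, $a>-1$ and let $C$ be any constant. Then the integral operators on $L^2[0,1]$ with kernels \[ k_{C,\gamma}(x,y)=C\exp\big[CT^{3/4}(x)+CT^{3/4}(y)\big]\frac{\sqrt{2y+\gamma-1}}{(2x+\gamma-1)^{-1/2}}\frac{(y^2+\gamma y-y)^{a/2}}{(x^2+\gamma x-x)^{(a+1)/2}}\mathbf 1_{\{y<x\}}, \] where $T(x)=\frac1\beta\big(\log\frac1x+\log\frac1{\gamma-1+x}\big)$, and \[ k_C(x,y)=C\exp\big[C(\log(1/x))^{3/4}+C(\log(1/y))^{3/4}\big]y^{a/2}x^{-(a+1)/2}\mathbf 1_{\{y<x\}} \] are Hilbert–Schmidt. *)

theory Defs
  imports "HOL-Analysis.Analysis"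
begin

text \<open>An integral operator on L^2[0,1] with kernel k is Hilbert-Schmidt iff k is in L^2([0,1]^2),
  i.e. k is (Lebesgue/Borel) measurable on the unit square and its square is integrable there.\<close>
definition hilbert_schmidt_kernel :: "(real \<Rightarrow> real \<Rightarrow> real) \<Rightarrow> bool" where
  "hilbert_schmidt_kernel k \<longleftrightarrow>
     set_borel_measurable lborel ({0..1} \<times> {0..1}) (\<lambda>(x, y). k x y) \<and>
     set_integrable lborel ({0..1} \<times> {0..1}) (\<lambda>(x, y). (k x y)\<^sup>2)"

definition T_fun :: "real \<Rightarrow> real \<Rightarrow> real \<Rightarrow> real" where
  "T_fun \<beta> \<gamma> x = (1 / \<beta>) * (ln (1 / x) + ln (1 / (\<gamma> - 1 + x)))"

end

theory Submission
  imports Defs "HOL-Analysis.Analysis"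
begin

lemma oneD: fixes t::real assumes "t < 1"
  shows "set_integrable lborel {0..1} (\<lambda>x::real. x powr (-t))"
proof -
  have "(\<lambda>x::real. x powr (-t)) integrable_on {0..1}"
    by (rule integrable_on_powr_from_0) (use assms in auto)
  then have "(\<lambda>x::real. x powr (-t)) absolutely_integrable_on {0..1}"
    by (rule nonnegative_absolutely_integrable_1) auto
  then have "integrable (completion lborel) (\<lambda>x::real. indicator {0..1} x *\<^sub>R x powr (-t))"
    unfolding set_integrable_def by simp
  then show ?thesis unfolding set_integrable_def
    by (subst (asm) integrable_completion) auto
qed

lemma twoD: fixes s t::real assumes "t < 1" "s < 1"
  shows "set_integrable lborel ({0..1}\<times>{0..1}) (\<lambda>(x::real,y::real). x powr (-t) * y powr (-s))"
proof -
  have A: "integrable lborel (\<lambda>x::real. indicator {0..1} x *\<^sub>R x powr (-t))"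
    using oneD[OF assms(1)] unfolding set_integrable_def .
  have B: "integrable lborel (\<lambda>x::real. indicator {0..1} x *\<^sub>R x powr (-s))"
    using oneD[OF assms(2)] unfolding set_integrable_def .
  have eq: "(\<lambda>z::real\<times>real. indicator ({0..1}\<times>{0..1}) z *\<^sub>R (case z of (x,y) \<Rightarrow> x powr (-t) * y powr (-s)))
     = (\<lambda>z. (indicator {0..1} (fst z) *\<^sub>R fst z powr (-t)) * (indicator {0..1} (snd z) *\<^sub>R snd z powr (-s)))"
    by (auto simp: indicator_def split: split_indicator)
  have "integrable (lborel \<Otimes>\<^sub>M lborel) (\<lambda>z::real\<times>real. (indicator {0..1} (fst z) *\<^sub>R fst z powr (-t)) * (indicator {0..1} (snd z) *\<^sub>R snd z powr (-s)))"
  proof (rule lborel_pair.Fubini_integrable)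
    show "(\<lambda>z::real\<times>real. (indicator {0..1} (fst z) *\<^sub>R fst z powr (-t)) * (indicator {0..1} (snd z) *\<^sub>R snd z powr (-s))) \<in> borel_measurable (lborel \<Otimes>\<^sub>M lborel)"
      by measurable
    show "integrable lborel (\<lambda>x. \<integral> y. norm ((indicator {0..1} (fst (x,y)) *\<^sub>R fst (x,y) powr (-t)) * (indicator {0..1} (snd (x,y)) *\<^sub>R snd (x,y) powr (-s))) \<partial>lborel)"
      using integrable_mult_right[OF integrable_norm[OF A], of "\<integral> y. norm (indicator {0..1} y *\<^sub>R y powr (-s)) \<partial>lborel"]
      by (simp add: norm_mult mult.commute)
    show "AE x in lborel. integrable lborel (\<lambda>y. (indicator {0..1} (fst (x,y)) *\<^sub>R fst (x,y) powr (-t)) * (indicator {0..1} (snd (x,y)) *\<^sub>R snd (x,y) powr (-s)))"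
      using integrable_mult_right[OF B] by simp
  qed
  then show ?thesis unfolding set_integrable_def lborel_prod eq .
qed

lemma reduce:
  fixes p y x m :: real
  assumes p: "p > -1" and m: "m = min (p+1) 1" and y: "0 \<le> y" "y < x" and x: "x \<le> 1"
  shows "y powr (p/2 - m/16) * x powr (-(p+1)/2 - m/16) \<le> y powr (-(1 - m/2)/2) * x powr (-(3*m/4)/2)"
proof (cases "y = 0")
  case True then show ?thesis by simp
next
  case False
  then have y0: "y > 0" using y by simp
  define e where "e = (p - m/8 + (1 - m/2))/2"
  have m1: "m \<le> p + 1" "m \<le> 1" "m > 0" using m p by auto
  have "p - m/8 + (1 - m/2) \<ge> 0" using m1 by linarith
  then have e0: "e \<ge> 0" unfolding e_def by simp
  have ex: "p/2 - m/16 = -(1 - m/2)/2 + e" unfolding e_def by (simp add: field_simps)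
  have ex2: "e + (-(p+1)/2 - m/16) = -(3*m/4)/2" unfolding e_def by (simp add: field_simps)
  have "y powr (p/2 - m/16) = y powr (-(1 - m/2)/2) * y powr e"
    by (simp only: ex powr_add)
  also have "\<dots> \<le> y powr (-(1 - m/2)/2) * x powr e"
    by (intro mult_left_mono powr_mono2) (use e0 y in auto)
  finally have 1: "y powr (p/2 - m/16) \<le> y powr (-(1 - m/2)/2) * x powr e" .
  have "y powr (p/2 - m/16) * x powr (-(p+1)/2 - m/16) \<le> y powr (-(1 - m/2)/2) * x powr e * x powr (-(p+1)/2 - m/16)"
    by (intro mult_right_mono 1) auto
  also have "\<dots> = y powr (-(1 - m/2)/2) * x powr (-(3*m/4)/2)"
    by (simp only: mult.assoc powr_add[symmetric] ex2)
  finally show ?thesis .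
qed

lemma sqpowr: "((y::real) powr a)\<^sup>2 = y powr (-(2*(-a)))"
  by (simp add: power2_eq_square powr_add[symmetric])

lemma HS_of_bound:
  fixes k :: "real \<Rightarrow> real \<Rightarrow> real" and p :: real
  assumes meas: "set_borel_measurable lborel ({0..1}\<times>{0..1}) (\<lambda>(x,y). k x y)"
    and p: "p > -1"
    and bnd: "\<And>\<delta>. \<delta> > 0 \<Longrightarrow> \<exists>M. \<forall>x y. 0 \<le> y \<longrightarrow> y < x \<longrightarrow> x \<le> 1 \<longrightarrow>
                 \<bar>k x y\<bar> \<le> M * (y powr (p/2 - \<delta>) * x powr (-(p+1)/2 - \<delta>))"
    and zero: "\<And>x y. \<not> y < x \<Longrightarrow> k x y = 0"
  shows "hilbert_schmidt_kernel k"
proof -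
  define m where "m = min (p+1) 1"
  have m1: "m \<le> p + 1" "m \<le> 1" "m > 0" using m_def p by auto
  obtain M where M: "\<And>x y. 0 \<le> y \<Longrightarrow> y < x \<Longrightarrow> x \<le> 1 \<Longrightarrow>
                 \<bar>k x y\<bar> \<le> M * (y powr (p/2 - m/16) * x powr (-(p+1)/2 - m/16))"
    using bnd[of "m/16"] m1 by auto
  define s where "s = 1 - m/2"
  define t where "t = 3*m/4"
  have st: "s < 1" "t < 1" using m1 unfolding s_def t_def by auto
  have pw: "\<bar>k x y\<bar> \<le> \<bar>M\<bar> * (y powr (-s/2) * x powr (-t/2))"
    if "x \<in> {0..1}" "y \<in> {0..1}" for x y
  proof (cases "y < x")
    case False then show ?thesis using zero by simp
  next
    case True
    have "\<bar>k x y\<bar> \<le> M * (y powr (p/2 - m/16) * x powr (-(p+1)/2 - m/16))"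
      using M[of y x] that True by auto
    also have "\<dots> \<le> \<bar>M\<bar> * (y powr (p/2 - m/16) * x powr (-(p+1)/2 - m/16))"
      by (intro mult_right_mono) auto
    also have "\<dots> \<le> \<bar>M\<bar> * (y powr (-s/2) * x powr (-t/2))"
      using reduce[OF p m_def, of y x] that True unfolding s_def t_def
      by (intro mult_left_mono) auto
    finally show ?thesis .
  qed
  have sq: "(k x y)\<^sup>2 \<le> M\<^sup>2 * (x powr (-t) * y powr (-s))"
    if "x \<in> {0..1}" "y \<in> {0..1}" for x y
  proof -
    have "(k x y)\<^sup>2 = \<bar>k x y\<bar>\<^sup>2" by simp
    also have "\<dots> \<le> (\<bar>M\<bar> * (y powr (-s/2) * x powr (-t/2)))\<^sup>2"
      by (intro power_mono pw that) auto
    also have "\<dots> = M\<^sup>2 * (x powr (-t) * y powr (-s))"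
      by (simp only: power_mult_distrib sqpowr power2_abs) (simp add: algebra_simps)
    finally show ?thesis .
  qed
  have I: "set_integrable lborel ({0..1}\<times>{0..1}) (\<lambda>(x::real,y::real). M\<^sup>2 * (x powr (-t) * y powr (-s)))"
    using set_integrable_mult_right[OF twoD[OF st(2) st(1)], of "M\<^sup>2"]
    by (simp add: case_prod_beta')
  have meas2: "set_borel_measurable lborel ({0..1}\<times>{0..1}) (\<lambda>(x,y). (k x y)\<^sup>2)"
  proof -
    have "(\<lambda>z. (indicator ({0..1}\<times>{0..1}) z *\<^sub>R (case z of (x,y) \<Rightarrow> k x y))\<^sup>2) \<in> borel_measurable lborel"
      using meas unfolding set_borel_measurable_def by measurable
    also have "(\<lambda>z. (indicator ({0..1}\<times>{0..1}) z *\<^sub>R (case z of (x,y) \<Rightarrow> k x y))\<^sup>2)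
       = (\<lambda>z. indicator ({0..1}\<times>{0..1}) z *\<^sub>R (case z of (x,y) \<Rightarrow> (k x y)\<^sup>2))"
      by (auto simp: indicator_def fun_eq_iff)
    finally show ?thesis unfolding set_borel_measurable_def .
  qed
  have "set_integrable lborel ({0..1}\<times>{0..1}) (\<lambda>(x,y). (k x y)\<^sup>2)"
  proof (rule set_integrable_bound[OF I meas2])
    show "AE z in lborel. z \<in> {0..1}\<times>{0..1} \<longrightarrow> norm (case z of (x,y) \<Rightarrow> (k x y)\<^sup>2)
          \<le> norm (case z of (x::real,y::real) \<Rightarrow> M\<^sup>2 * (x powr (-t) * y powr (-s)))"
    proof (intro always_eventually allI impI)
      fix z :: "real\<times>real" assume "z \<in> {0..1}\<times>{0..1}"
      then obtain x y where z: "z = (x,y)" "x \<in> {0..1}" "y \<in> {0..1}" by auto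
      have "0 \<le> M\<^sup>2 * (x powr (-t) * y powr (-s))" by simp
      then show "norm (case z of (x,y) \<Rightarrow> (k x y)\<^sup>2)
          \<le> norm (case z of (x::real,y::real) \<Rightarrow> M\<^sup>2 * (x powr (-t) * y powr (-s)))"
        using sq[OF z(2,3)] z(1) by simp
    qed
  qed
  then show ?thesis using meas unfolding hilbert_schmidt_kernel_def by simp
qed


lemma ebase:
  fixes c \<epsilon> w :: real
  assumes c: "c \<ge> 0" and e: "\<epsilon> > 0" and w: "w \<ge> 0"
  shows "c * w powr (3/4) \<le> \<epsilon> * w + c * (c/\<epsilon>)^3"
proof -
  have w34: "w powr (3/4) = (w powr (1/4))^3"
  proof (cases "w = 0")
    case False
    then have wp: "0 < w powr (1/4)" using w by simp
    have "(w powr (1/4)) powr (real 3) = (w powr (1/4))^3" by (rule powr_realpow[OF wp])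
    moreover have "(w powr (1/4)) powr (real 3) = w powr (3/4)" by (simp add: powr_powr)
    ultimately show ?thesis by simp
  qed simp
  have w1: "w = w powr (1/4) * w powr (3/4)"
    using w by (cases "w = 0") (simp_all add: powr_add[symmetric])
  show ?thesis
  proof (cases "w powr (1/4) \<le> c/\<epsilon>")
    case True
    have "w powr (3/4) \<le> (c/\<epsilon>)^3" unfolding w34 by (intro power_mono True) auto
    then have "c * w powr (3/4) \<le> c * (c/\<epsilon>)^3" using c by (rule mult_left_mono)
    moreover have "0 \<le> \<epsilon> * w" using e w by simp
    ultimately show ?thesis by linarith
  next
    case False
    then have "c \<le> \<epsilon> * w powr (1/4)" using e by (simp add: field_simps)
    then have "c * w powr (3/4) \<le> \<epsilon> * w powr (1/4) * w powr (3/4)"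
      by (rule mult_right_mono) simp
    also have "\<dots> = \<epsilon> * w" using w1 by (simp add: mult.assoc)
    finally have "c * w powr (3/4) \<le> \<epsilon> * w" .
    moreover have "0 \<le> c * (c/\<epsilon>)^3" using c e by simp
    ultimately show ?thesis by linarith
  qed
qed

lemma expb:
  fixes c A B \<delta> :: real
  assumes A: "A \<ge> 0" and B: "B \<ge> 0" and d: "\<delta> > 0"
  shows "\<exists>K>0. \<forall>x w. 0 < x \<longrightarrow> x \<le> 1 \<longrightarrow> 0 \<le> w \<longrightarrow> w \<le> A * ln (1/x) + B \<longrightarrow>
            exp (c * w powr (3/4)) \<le> K * x powr (-\<delta>)"
proof (cases "c \<le> 0")
  case True
  show ?thesis
  proof (intro exI[of _ 1] conjI allI impI)
    fix x w :: real assume x: "0 < x" "x \<le> 1" and w: "0 \<le> w"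
    have "exp (c * w powr (3/4)) \<le> exp 0"
      using True w by (intro exp_le_cancel_iff[THEN iffD2] mult_nonpos_nonneg) auto
    also have "\<dots> \<le> x powr (-\<delta>)"
      using x d by (simp add: powr_minus one_le_inverse_iff powr_le1 less_le_trans[OF _ x(2)] )
    finally show "exp (c * w powr (3/4)) \<le> 1 * x powr (-\<delta>)" by simp
  qed simp
next
  case False
  define \<epsilon> where "\<epsilon> = \<delta> / (A + 1)"
  have e: "\<epsilon> > 0" using d A unfolding \<epsilon>_def by simp
  have eA: "\<epsilon> * A \<le> \<delta>"
  proof -
    have "\<epsilon> * A = \<delta> * (A / (A+1))" unfolding \<epsilon>_def by simp
    also have "\<dots> \<le> \<delta> * 1" using A d by (intro mult_left_mono) auto
    finally show ?thesis by simp
  qed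
  define K where "K = exp (\<epsilon> * B + c * (c/\<epsilon>)^3)"
  show ?thesis
  proof (intro exI[of _ K] conjI allI impI)
    show "K > 0" unfolding K_def by simp
    fix x w :: real assume x: "0 < x" "x \<le> 1" and w: "0 \<le> w" and wb: "w \<le> A * ln (1/x) + B"
    have L: "ln (1/x) \<ge> 0" using x by (simp add: ln_div)
    have "c * w powr (3/4) \<le> \<epsilon> * w + c * (c/\<epsilon>)^3"
      using ebase[of c \<epsilon> w] False e w by simp
    also have "\<dots> \<le> \<epsilon> * (A * ln (1/x) + B) + c * (c/\<epsilon>)^3"
      using wb e by simp
    also have "\<dots> = (\<epsilon> * A) * ln (1/x) + (\<epsilon> * B + c * (c/\<epsilon>)^3)" by (simp add: algebra_simps)
    also have "\<dots> \<le> \<delta> * ln (1/x) + (\<epsilon> * B + c * (c/\<epsilon>)^3)"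
      using eA L by (simp add: mult_right_mono)
    finally have "exp (c * w powr (3/4)) \<le> exp (\<delta> * ln (1/x) + (\<epsilon> * B + c * (c/\<epsilon>)^3))" by simp
    also have "\<dots> = exp (\<delta> * ln (1/x)) * K" unfolding K_def by (rule exp_add)
    also have "exp (\<delta> * ln (1/x)) = x powr (-\<delta>)"
      using x by (simp add: powr_def ln_div)
    finally show "exp (c * w powr (3/4)) \<le> K * x powr (-\<delta>)" by (simp add: mult.commute)
  qed
qed

lemma combine:
  fixes k M0 E K x y p \<delta> :: real
  assumes "\<bar>k\<bar> \<le> M0 * E * (y powr (p/2) * x powr (-(p+1)/2))" "0 \<le> E"
    "E \<le> K * (x powr (-\<delta>) * y powr (-\<delta>))" "M0 \<ge> 0"
  shows "\<bar>k\<bar> \<le> (M0*K) * (y powr (p/2-\<delta>) * x powr (-(p+1)/2-\<delta>))"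
proof -
  have "\<bar>k\<bar> \<le> M0 * (K * (x powr (-\<delta>) * y powr (-\<delta>))) * (y powr (p/2) * x powr (-(p+1)/2))"
    using assms(1) by (rule order_trans)
      (intro mult_right_mono mult_left_mono assms, simp_all)
  also have "\<dots> = (M0*K) * ((y powr (p/2) * y powr (-\<delta>)) * (x powr (-(p+1)/2) * x powr (-\<delta>)))"
    by (simp add: algebra_simps)
  also have "\<dots> = (M0*K) * (y powr (p/2-\<delta>) * x powr (-(p+1)/2-\<delta>))"
    by (simp add: powr_add[symmetric])
  finally show ?thesis .
qed


lemma kernel2:
  fixes a C :: real
  assumes "a > -1"
  shows "hilbert_schmidt_kernel (\<lambda>x y.
            (if y < x then
               C * exp (C * (ln (1 / x)) powr (3/4) + C * (ln (1 / y)) powr (3/4))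
                 * y powr (a / 2) * x powr (-(a + 1) / 2)
             else 0))"
proof (rule HS_of_bound[where p = a])
  show "set_borel_measurable lborel ({0..1}\<times>{0..1}) (\<lambda>(x,y). (if y < x then
               C * exp (C * (ln (1 / x)) powr (3/4) + C * (ln (1 / y)) powr (3/4))
                 * y powr (a / 2) * x powr (-(a + 1) / 2)
             else 0))"
    unfolding set_borel_measurable_def case_prod_beta' lborel_prod[symmetric] by measurable
  show "a > -1" by fact
  fix \<delta> :: real assume d: "\<delta> > 0"
  obtain K where K: "K > 0" "\<And>x w. 0 < x \<Longrightarrow> x \<le> 1 \<Longrightarrow> 0 \<le> w \<Longrightarrow> w \<le> 1 * ln (1/x) + 0 \<Longrightarrow>
            exp (C * w powr (3/4)) \<le> K * x powr (-\<delta>)"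
    using expb[of 1 0 \<delta> C] d by auto
  show "\<exists>M. \<forall>x y. 0 \<le> y \<longrightarrow> y < x \<longrightarrow> x \<le> 1 \<longrightarrow>
      \<bar>(if y < x then
               C * exp (C * (ln (1 / x)) powr (3/4) + C * (ln (1 / y)) powr (3/4))
                 * y powr (a / 2) * x powr (-(a + 1) / 2)
             else 0)\<bar> \<le> M * (y powr (a/2 - \<delta>) * x powr (-(a+1)/2 - \<delta>))"
  proof (intro exI[of _ "\<bar>C\<bar> * (K*K)"] allI impI)
    fix x y :: real assume y: "0 \<le> y" and yx: "y < x" and x: "x \<le> 1"
    show "\<bar>(if y < x then
               C * exp (C * (ln (1 / x)) powr (3/4) + C * (ln (1 / y)) powr (3/4))
                 * y powr (a / 2) * x powr (-(a + 1) / 2)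
             else 0)\<bar> \<le> \<bar>C\<bar> * (K*K) * (y powr (a/2 - \<delta>) * x powr (-(a+1)/2 - \<delta>))"
    proof (cases "y = 0")
      case True
      then have z: "y powr (a/2) = 0" by simp
      have "0 \<le> \<bar>C\<bar> * (K*K) * (y powr (a/2 - \<delta>) * x powr (-(a+1)/2 - \<delta>))" by simp
      then show ?thesis by (simp only: z mult_zero_right mult_zero_left if_cancel abs_zero)
    next
      case False
      then have y0: "0 < y" using y by simp
      have x0: "0 < x" using y0 yx by simp
      have Lx: "ln (1/x) \<ge> 0" "ln (1/y) \<ge> 0" using x0 x y0 yx by (simp_all add: ln_div)
      define E where "E = exp (C * (ln (1 / x)) powr (3/4) + C * (ln (1 / y)) powr (3/4))"
      have e1: "exp (C * ln (1/x) powr (3/4)) \<le> K * x powr (-\<delta>)"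
        using K(2)[of x "ln (1/x)"] x0 x Lx by simp
      have e2: "exp (C * ln (1/y) powr (3/4)) \<le> K * y powr (-\<delta>)"
        using K(2)[of y "ln (1/y)"] y0 yx x Lx by simp
      have "E \<le> (K * x powr (-\<delta>)) * (K * y powr (-\<delta>))"
        unfolding E_def exp_add
        by (rule mult_mono[OF e1 e2]) (use K(1) in simp_all)
      then have E: "E \<le> (K*K) * (x powr (-\<delta>) * y powr (-\<delta>))" by (simp add: algebra_simps)
      have ab: "\<bar>C * E * y powr (a / 2) * x powr (-(a + 1) / 2)\<bar> \<le> \<bar>C\<bar> * E * (y powr (a/2) * x powr (-(a+1)/2))"
        unfolding E_def by (simp add: abs_mult)
      have E0: "0 \<le> E" unfolding E_def by simp
      have eq: "(if y < x then
               C * exp (C * (ln (1 / x)) powr (3/4) + C * (ln (1 / y)) powr (3/4))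
                 * y powr (a / 2) * x powr (-(a + 1) / 2)
             else 0) = C * E * y powr (a / 2) * x powr (-(a + 1) / 2)"
        using yx unfolding E_def by simp
      have fin: "\<bar>C * E * y powr (a / 2) * x powr (-(a + 1) / 2)\<bar> \<le> (\<bar>C\<bar> * (K*K)) * (y powr (a/2 - \<delta>) * x powr (-(a+1)/2 - \<delta>))"
        by (rule combine[OF ab E0 E]) simp
      show ?thesis by (subst eq) (rule fin)
    qed
  qed
qed simp



lemma Tbound:
  fixes \<beta> \<gamma> x :: real
  assumes b: "\<beta> > 0" and g: "\<gamma> \<ge> 1" and x: "0 < x" "x \<le> 1"
  shows "\<bar>T_fun \<beta> \<gamma> x\<bar> \<le> (2/\<beta>) * ln (1/x) + ln \<gamma> / \<beta>"
proof -
  have l1: "ln (1/x) = - ln x" using x by (simp add: ln_div)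
  have lx: "ln x \<le> 0" using x by simp
  have gx: "\<gamma> - 1 + x > 0" using g x by simp
  have l2: "ln (1/(\<gamma> - 1 + x)) = - ln (\<gamma> - 1 + x)" using gx by (simp add: ln_div)
  have b2: "\<bar>ln (\<gamma> - 1 + x)\<bar> \<le> - ln x + ln \<gamma>"
  proof (cases "\<gamma> - 1 + x \<ge> 1")
    case True
    have "ln (\<gamma> - 1 + x) \<le> ln \<gamma>" using gx x by simp
    moreover have "ln (\<gamma> - 1 + x) \<ge> 0" using True by simp
    ultimately show ?thesis using lx by simp
  next
    case False
    have "ln x \<le> ln (\<gamma> - 1 + x)" using g x by simp
    moreover have "ln (\<gamma> - 1 + x) \<le> 0" using False gx by simp
    moreover have "ln \<gamma> \<ge> 0" using g by simp
    ultimately show ?thesis by simp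
  qed
  have "\<bar>T_fun \<beta> \<gamma> x\<bar> = \<bar>- ln x - ln (\<gamma> - 1 + x)\<bar> / \<beta>"
    unfolding T_fun_def l1 l2 using b by (simp add: abs_mult abs_divide)
  also have "\<dots> \<le> (- ln x + (- ln x + ln \<gamma>)) / \<beta>"
    using b b2 lx by (intro divide_right_mono) (auto simp: abs_le_iff)
  also have "\<dots> = (2/\<beta>) * ln (1/x) + ln \<gamma> / \<beta>" unfolding l1 using b by (simp add: field_simps)
  finally show ?thesis .
qed

lemma Ebound:
  fixes \<beta> \<gamma> C \<delta> :: real
  assumes b: "\<beta> > 0" and g: "\<gamma> \<ge> 1" and d: "\<delta> > 0"
  shows "\<exists>K\<ge>0. \<forall>x y. 0 < y \<longrightarrow> y < x \<longrightarrow> x \<le> 1 \<longrightarrow>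
     exp (C * \<bar>T_fun \<beta> \<gamma> x\<bar> powr (3/4) + C * \<bar>T_fun \<beta> \<gamma> y\<bar> powr (3/4)) \<le> K * (x powr (-\<delta>) * y powr (-\<delta>))"
proof -
  have A: "2/\<beta> \<ge> 0" "ln \<gamma> / \<beta> \<ge> 0" using b g by auto
  obtain K where K: "K > 0" "\<And>x w. 0 < x \<Longrightarrow> x \<le> 1 \<Longrightarrow> 0 \<le> w \<Longrightarrow> w \<le> (2/\<beta>) * ln (1/x) + ln \<gamma> / \<beta> \<Longrightarrow>
            exp (C * w powr (3/4)) \<le> K * x powr (-\<delta>)"
    using expb[OF A d, of C] by blast
  show ?thesis
  proof (intro exI[of _ "K*K"] conjI allI impI)
    show "K*K \<ge> 0" by simp
    fix x y :: real assume y: "0 < y" and yx: "y < x" and x: "x \<le> 1"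
    have e1: "exp (C * \<bar>T_fun \<beta> \<gamma> x\<bar> powr (3/4)) \<le> K * x powr (-\<delta>)"
      by (rule K(2)) (use y yx x Tbound[OF b g, of x] in auto)
    have e2: "exp (C * \<bar>T_fun \<beta> \<gamma> y\<bar> powr (3/4)) \<le> K * y powr (-\<delta>)"
      by (rule K(2)) (use y yx x Tbound[OF b g, of y] in auto)
    have "exp (C * \<bar>T_fun \<beta> \<gamma> x\<bar> powr (3/4) + C * \<bar>T_fun \<beta> \<gamma> y\<bar> powr (3/4))
        \<le> (K * x powr (-\<delta>)) * (K * y powr (-\<delta>))"
      unfolding exp_add by (rule mult_mono[OF e1 e2]) (use K(1) in simp_all)
    then show "exp (C * \<bar>T_fun \<beta> \<gamma> x\<bar> powr (3/4) + C * \<bar>T_fun \<beta> \<gamma> y\<bar> powr (3/4)) \<le> K * K * (x powr (-\<delta>) * y powr (-\<delta>))"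
      by (simp add: algebra_simps)
  qed
qed

lemma Sfac:
  fixes x y g :: real
  assumes "g \<ge> 0" "0 < y" "y < x"
  shows "sqrt (2 * y + g) / (2 * x + g) powr (-1/2) = sqrt (2*y+g) * sqrt (2*x+g)"
proof -
  have "(2 * x + g) powr (-1/2) = 1 / (2 * x + g) powr (1/2)"
    using powr_minus_divide[of "2*x+g" "1/2"] by simp
  also have "(2 * x + g) powr (1/2) = sqrt (2*x+g)" using assms by (intro powr_half_sqrt) simp
  finally show ?thesis by simp
qed

lemma Fbound_gt:
  fixes x y \<gamma> a :: real
  assumes g: "\<gamma> > 1" and a: "a > -1" and y: "0 < y" "y < x" and x: "x \<le> 1"
  defines "B \<equiv> (1+\<gamma>) * (((\<gamma>-1) powr (a/2) + \<gamma> powr (a/2)) / (\<gamma>-1) powr ((a+1)/2))"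
  shows "0 \<le> (sqrt (2 * y + \<gamma> - 1) / (2 * x + \<gamma> - 1) powr (-1/2))
                 * ((y\<^sup>2 + \<gamma> * y - y) powr (a / 2) / (x\<^sup>2 + \<gamma> * x - x) powr ((a + 1) / 2))"
    and "(sqrt (2 * y + \<gamma> - 1) / (2 * x + \<gamma> - 1) powr (-1/2))
                 * ((y\<^sup>2 + \<gamma> * y - y) powr (a / 2) / (x\<^sup>2 + \<gamma> * x - x) powr ((a + 1) / 2))
          \<le> B * (y powr (a/2) * x powr (-(a+1)/2))"
proof -
  define g0 where "g0 = \<gamma> - 1"
  have g0: "g0 > 0" using g unfolding g0_def by simp
  have x0: "x > 0" using y by simp
  have S: "sqrt (2 * y + \<gamma> - 1) / (2 * x + \<gamma> - 1) powr (-1/2) = sqrt (2*y+g0) * sqrt (2*x+g0)"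
    using Sfac[of g0 y x] g0 y unfolding g0_def by (simp add: algebra_simps)
  have Sb: "sqrt (2*y+g0) * sqrt (2*x+g0) \<le> sqrt (1+\<gamma>) * sqrt (1+\<gamma>)"
    using y x g0 unfolding g0_def by (intro mult_mono) auto
  have S0: "0 \<le> sqrt (2*y+g0) * sqrt (2*x+g0)" using y g0 by simp
  have Py: "(y\<^sup>2 + \<gamma> * y - y) powr (a / 2) = y powr (a/2) * (y+g0) powr (a/2)"
  proof -
    have "y\<^sup>2 + \<gamma> * y - y = y * (y+g0)" unfolding g0_def by (simp add: algebra_simps power2_eq_square)
    then show ?thesis using y g0 by (simp add: powr_mult)
  qed
  have Px: "(x\<^sup>2 + \<gamma> * x - x) powr ((a+1) / 2) = x powr ((a+1)/2) * (x+g0) powr ((a+1)/2)"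
  proof -
    have "x\<^sup>2 + \<gamma> * x - x = x * (x+g0)" unfolding g0_def by (simp add: algebra_simps power2_eq_square)
    then show ?thesis using x0 g0 by (simp add: powr_mult)
  qed
  define U where "U = (y+g0) powr (a/2)"
  define V where "V = 1 / (x+g0) powr ((a+1)/2)"
  have U: "U \<le> g0 powr (a/2) + \<gamma> powr (a/2)" "0 \<le> U"
  proof -
    show "0 \<le> U" unfolding U_def by simp
    show "U \<le> g0 powr (a/2) + \<gamma> powr (a/2)"
    proof (cases "a \<ge> 0")
      case True
      have "U \<le> \<gamma> powr (a/2)" unfolding U_def using True y x g0 unfolding g0_def
        by (intro powr_mono2) auto
      moreover have "0 \<le> g0 powr (a/2)" by simp
      ultimately show ?thesis by linarith
    next
      case False
      have "U \<le> g0 powr (a/2)" unfolding U_def using False y g0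
        by (intro powr_mono2') auto
      moreover have "0 \<le> \<gamma> powr (a/2)" by simp
      ultimately show ?thesis by linarith
    qed
  qed
  have V: "V \<le> 1 / g0 powr ((a+1)/2)" "0 \<le> V"
  proof -
    show "0 \<le> V" unfolding V_def by simp
    have "g0 powr ((a+1)/2) \<le> (x+g0) powr ((a+1)/2)" using a g0 x0 by (intro powr_mono2) auto
    moreover have "0 < g0 powr ((a+1)/2)" using g0 by simp
    moreover have "0 < (x+g0) powr ((a+1)/2)" using x0 g0 by simp
    ultimately show "V \<le> 1 / g0 powr ((a+1)/2)" unfolding V_def
      by (intro divide_left_mono) (auto intro: mult_pos_pos)
  qed
  have R: "(y\<^sup>2 + \<gamma> * y - y) powr (a / 2) / (x\<^sup>2 + \<gamma> * x - x) powr ((a + 1) / 2)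
      = (y powr (a/2) * x powr (-(a+1)/2)) * (U * V)"
  proof -
    have m: "-(a+1)/2 = -((a+1)/2)" by (simp only: minus_divide_left)
    have xm: "x powr (-(a+1)/2) = 1 / x powr ((a+1)/2)" unfolding m by (rule powr_minus_divide)
    have gen: "(u1*u2)/(u3*u4) = (u1*(1/u3))*(u2*(1/u4))" for u1 u2 u3 u4 :: real by simp
    show ?thesis unfolding Py Px U_def V_def xm by (rule gen)
  qed
  have YX: "0 \<le> y powr (a/2) * x powr (-(a+1)/2)" by simp
  show "0 \<le> (sqrt (2 * y + \<gamma> - 1) / (2 * x + \<gamma> - 1) powr (-1/2))
                 * ((y\<^sup>2 + \<gamma> * y - y) powr (a / 2) / (x\<^sup>2 + \<gamma> * x - x) powr ((a + 1) / 2))"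
    unfolding S R using S0 YX U V by simp
  have "(sqrt (2 * y + \<gamma> - 1) / (2 * x + \<gamma> - 1) powr (-1/2))
                 * ((y\<^sup>2 + \<gamma> * y - y) powr (a / 2) / (x\<^sup>2 + \<gamma> * x - x) powr ((a + 1) / 2))
     = (sqrt (2*y+g0) * sqrt (2*x+g0)) * (U * V) * (y powr (a/2) * x powr (-(a+1)/2))"
    unfolding S R by (simp add: algebra_simps)
  also have "\<dots> \<le> (sqrt (1+\<gamma>) * sqrt (1+\<gamma>)) * ((g0 powr (a/2) + \<gamma> powr (a/2)) * (1 / g0 powr ((a+1)/2)))
       * (y powr (a/2) * x powr (-(a+1)/2))"
  proof -
    have f1: "U*V \<le> (g0 powr (a/2) + \<gamma> powr (a/2)) * (1 / g0 powr ((a+1)/2))"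
      by (rule mult_mono) (use U V in simp_all)
    have f2: "(sqrt (2*y+g0) * sqrt (2*x+g0)) * (U * V) \<le> (sqrt (1+\<gamma>) * sqrt (1+\<gamma>)) * ((g0 powr (a/2) + \<gamma> powr (a/2)) * (1 / g0 powr ((a+1)/2)))"
      by (rule mult_mono[OF Sb f1]) (use U V in simp_all)
    show ?thesis by (rule mult_right_mono[OF f2 YX])
  qed
  also have "\<dots> = B * (y powr (a/2) * x powr (-(a+1)/2))"
    unfolding B_def g0_def using g by simp
  finally show "(sqrt (2 * y + \<gamma> - 1) / (2 * x + \<gamma> - 1) powr (-1/2))
                 * ((y\<^sup>2 + \<gamma> * y - y) powr (a / 2) / (x\<^sup>2 + \<gamma> * x - x) powr ((a + 1) / 2))
          \<le> B * (y powr (a/2) * x powr (-(a+1)/2))" .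
qed

lemma Fbound_eq:
  fixes x y \<gamma> a :: real
  assumes g: "\<gamma> = 1" and y: "0 < y" "y < x" and x: "x \<le> 1"
  shows "0 \<le> (sqrt (2 * y + \<gamma> - 1) / (2 * x + \<gamma> - 1) powr (-1/2))
                 * ((y\<^sup>2 + \<gamma> * y - y) powr (a / 2) / (x\<^sup>2 + \<gamma> * x - x) powr ((a + 1) / 2))"
    and "(sqrt (2 * y + \<gamma> - 1) / (2 * x + \<gamma> - 1) powr (-1/2))
                 * ((y\<^sup>2 + \<gamma> * y - y) powr (a / 2) / (x\<^sup>2 + \<gamma> * x - x) powr ((a + 1) / 2))
          \<le> 2 * (y powr ((2*a+1)/2) * x powr (-((2*a+1)+1)/2))"
proof -
  have x0: "x > 0" using y by simp
  have S: "sqrt (2 * y + \<gamma> - 1) / (2 * x + \<gamma> - 1) powr (-1/2) = 2 * (y powr (1/2) * x powr (1/2))"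
  proof -
    have "sqrt (2 * y + \<gamma> - 1) / (2 * x + \<gamma> - 1) powr (-1/2) = sqrt (2*y+0) * sqrt (2*x+0)"
      using Sfac[of 0 y x] y g by simp
    also have "\<dots> = (sqrt 2 * sqrt 2) * (sqrt y * sqrt x)" by (simp add: real_sqrt_mult)
    also have "\<dots> = 2 * (y powr (1/2) * x powr (1/2))" using y x0 by (simp add: powr_half_sqrt)
    finally show ?thesis .
  qed
  have Py: "(y\<^sup>2 + \<gamma> * y - y) powr (a / 2) = y powr a"
  proof -
    have "(y\<^sup>2 + \<gamma> * y - y) = y * y" using g by (simp add: power2_eq_square)
    then have "(y\<^sup>2 + \<gamma> * y - y) powr (a / 2) = y powr (a/2) * y powr (a/2)" by (simp add: powr_mult)
    also have "\<dots> = y powr a" by (simp add: powr_add[symmetric])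
    finally show ?thesis .
  qed
  have Px: "(x\<^sup>2 + \<gamma> * x - x) powr ((a+1) / 2) = x powr (a+1)"
  proof -
    have "(x\<^sup>2 + \<gamma> * x - x) = x * x" using g by (simp add: power2_eq_square)
    then have "(x\<^sup>2 + \<gamma> * x - x) powr ((a+1) / 2) = x powr ((a+1)/2) * x powr ((a+1)/2)" by (simp add: powr_mult)
    also have "\<dots> = x powr (a+1)" by (simp add: powr_add[symmetric])
    finally show ?thesis .
  qed
  have eq: "(sqrt (2 * y + \<gamma> - 1) / (2 * x + \<gamma> - 1) powr (-1/2))
                 * ((y\<^sup>2 + \<gamma> * y - y) powr (a / 2) / (x\<^sup>2 + \<gamma> * x - x) powr ((a + 1) / 2))
        = 2 * (y powr ((2*a+1)/2) * x powr (1/2 - (a+1)))"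
  proof -
    have e1: "y powr (1/2) * y powr a = y powr ((2*a+1)/2)" by (simp add: powr_add[symmetric] field_simps)
    have e2: "x powr (1/2) / x powr (a+1) = x powr (1/2 - (a+1))" by (rule powr_diff[symmetric])
    have gen: "2 * (u1 * u2) * (u3 / u4) = 2 * ((u1 * u3) * (u2 / u4))" for u1 u2 u3 u4 :: real by simp
    show ?thesis unfolding S Py Px gen e1 e2 ..
  qed
  show "0 \<le> (sqrt (2 * y + \<gamma> - 1) / (2 * x + \<gamma> - 1) powr (-1/2))
                 * ((y\<^sup>2 + \<gamma> * y - y) powr (a / 2) / (x\<^sup>2 + \<gamma> * x - x) powr ((a + 1) / 2))"
    unfolding eq by simp
  have "x powr (1/2 - (a+1)) \<le> x powr (-((2*a+1)+1)/2)"
    using x x0 by (intro powr_mono') (auto simp: field_simps)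
  then show "(sqrt (2 * y + \<gamma> - 1) / (2 * x + \<gamma> - 1) powr (-1/2))
                 * ((y\<^sup>2 + \<gamma> * y - y) powr (a / 2) / (x\<^sup>2 + \<gamma> * x - x) powr ((a + 1) / 2))
          \<le> 2 * (y powr ((2*a+1)/2) * x powr (-((2*a+1)+1)/2))"
    unfolding eq by (intro mult_left_mono) auto
qed

lemma absCEF: "0 \<le> (E::real) \<Longrightarrow> 0 \<le> F \<Longrightarrow> \<bar>C * E * F\<bar> = \<bar>C\<bar> * E * F"
  by (simp add: abs_mult)

lemma kernel1_gen:
  fixes \<beta> \<gamma> a C p :: real
  assumes b: "\<beta> > 0" and g: "\<gamma> \<ge> 1" and p: "p > -1"
    and FB: "\<exists>B\<ge>0. \<forall>x y. 0 < y \<longrightarrow> y < x \<longrightarrow> x \<le> 1 \<longrightarrow> 0 \<le> (sqrt (2 * y + \<gamma> - 1) / (2 * x + \<gamma> - 1) powr (-1/2))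
                 * ((y\<^sup>2 + \<gamma> * y - y) powr (a / 2) / (x\<^sup>2 + \<gamma> * x - x) powr ((a + 1) / 2)) \<and> (sqrt (2 * y + \<gamma> - 1) / (2 * x + \<gamma> - 1) powr (-1/2))
                 * ((y\<^sup>2 + \<gamma> * y - y) powr (a / 2) / (x\<^sup>2 + \<gamma> * x - x) powr ((a + 1) / 2)) \<le> B * (y powr (p/2) * x powr (-(p+1)/2))"
  shows "hilbert_schmidt_kernel (\<lambda>x y. (if y < x then
               C * exp (C * \<bar>T_fun \<beta> \<gamma> x\<bar> powr (3/4) + C * \<bar>T_fun \<beta> \<gamma> y\<bar> powr (3/4))
                 * (sqrt (2 * y + \<gamma> - 1) / (2 * x + \<gamma> - 1) powr (-1/2))
                 * ((y\<^sup>2 + \<gamma> * y - y) powr (a / 2) / (x\<^sup>2 + \<gamma> * x - x) powr ((a + 1) / 2))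
             else 0))"
proof (rule HS_of_bound[where p = p])
  show "set_borel_measurable lborel ({0..1}\<times>{0..1}) (\<lambda>(x,y). (if y < x then
               C * exp (C * \<bar>T_fun \<beta> \<gamma> x\<bar> powr (3/4) + C * \<bar>T_fun \<beta> \<gamma> y\<bar> powr (3/4))
                 * (sqrt (2 * y + \<gamma> - 1) / (2 * x + \<gamma> - 1) powr (-1/2))
                 * ((y\<^sup>2 + \<gamma> * y - y) powr (a / 2) / (x\<^sup>2 + \<gamma> * x - x) powr ((a + 1) / 2))
             else 0))"
    unfolding set_borel_measurable_def case_prod_beta' lborel_prod[symmetric] T_fun_def by measurable
  show "p > -1" by fact
  fix \<delta> :: real assume d: "\<delta> > 0"
  obtain K where K: "K \<ge> 0" "\<And>x y. 0 < y \<Longrightarrow> y < x \<Longrightarrow> x \<le> 1 \<Longrightarrow>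
     exp (C * \<bar>T_fun \<beta> \<gamma> x\<bar> powr (3/4) + C * \<bar>T_fun \<beta> \<gamma> y\<bar> powr (3/4)) \<le> K * (x powr (-\<delta>) * y powr (-\<delta>))"
    using Ebound[OF b g d, of C] by blast
  obtain B where B: "B \<ge> 0" "\<And>x y. 0 < y \<Longrightarrow> y < x \<Longrightarrow> x \<le> 1 \<Longrightarrow> 0 \<le> (sqrt (2 * y + \<gamma> - 1) / (2 * x + \<gamma> - 1) powr (-1/2))
                 * ((y\<^sup>2 + \<gamma> * y - y) powr (a / 2) / (x\<^sup>2 + \<gamma> * x - x) powr ((a + 1) / 2)) \<and> (sqrt (2 * y + \<gamma> - 1) / (2 * x + \<gamma> - 1) powr (-1/2))
                 * ((y\<^sup>2 + \<gamma> * y - y) powr (a / 2) / (x\<^sup>2 + \<gamma> * x - x) powr ((a + 1) / 2)) \<le> B * (y powr (p/2) * x powr (-(p+1)/2))"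
    using FB by blast
  show "\<exists>M. \<forall>x y. 0 \<le> y \<longrightarrow> y < x \<longrightarrow> x \<le> 1 \<longrightarrow>
      \<bar>(if y < x then
               C * exp (C * \<bar>T_fun \<beta> \<gamma> x\<bar> powr (3/4) + C * \<bar>T_fun \<beta> \<gamma> y\<bar> powr (3/4))
                 * (sqrt (2 * y + \<gamma> - 1) / (2 * x + \<gamma> - 1) powr (-1/2))
                 * ((y\<^sup>2 + \<gamma> * y - y) powr (a / 2) / (x\<^sup>2 + \<gamma> * x - x) powr ((a + 1) / 2))
             else 0)\<bar> \<le> M * (y powr (p/2 - \<delta>) * x powr (-(p+1)/2 - \<delta>))"
  proof (intro exI[of _ "(\<bar>C\<bar> * B) * K"] allI impI)
    fix x y :: real assume y: "0 \<le> y" and yx: "y < x" and x: "x \<le> 1"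
    show "\<bar>(if y < x then
               C * exp (C * \<bar>T_fun \<beta> \<gamma> x\<bar> powr (3/4) + C * \<bar>T_fun \<beta> \<gamma> y\<bar> powr (3/4))
                 * (sqrt (2 * y + \<gamma> - 1) / (2 * x + \<gamma> - 1) powr (-1/2))
                 * ((y\<^sup>2 + \<gamma> * y - y) powr (a / 2) / (x\<^sup>2 + \<gamma> * x - x) powr ((a + 1) / 2))
             else 0)\<bar> \<le> (\<bar>C\<bar> * B) * K * (y powr (p/2 - \<delta>) * x powr (-(p+1)/2 - \<delta>))"
    proof (cases "y = 0")
      case True
      then have z: "(y\<^sup>2 + \<gamma> * y - y) powr (a / 2) = 0" by simp
      have "0 \<le> (\<bar>C\<bar> * B) * K * (y powr (p/2 - \<delta>) * x powr (-(p+1)/2 - \<delta>))"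
        using B(1) K(1) by simp
      then show ?thesis by (simp only: z div_0 mult_zero_right mult_zero_left if_cancel abs_zero)
    next
      case False
      then have y0: "0 < y" using y by simp
      define E where "E = exp (C * \<bar>T_fun \<beta> \<gamma> x\<bar> powr (3/4) + C * \<bar>T_fun \<beta> \<gamma> y\<bar> powr (3/4))"
      have E0: "0 \<le> E" unfolding E_def by simp
      have E: "E \<le> K * (x powr (-\<delta>) * y powr (-\<delta>))" unfolding E_def by (rule K(2)[OF y0 yx x])
      have F: "0 \<le> (sqrt (2 * y + \<gamma> - 1) / (2 * x + \<gamma> - 1) powr (-1/2))
                 * ((y\<^sup>2 + \<gamma> * y - y) powr (a / 2) / (x\<^sup>2 + \<gamma> * x - x) powr ((a + 1) / 2))" "(sqrt (2 * y + \<gamma> - 1) / (2 * x + \<gamma> - 1) powr (-1/2))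
                 * ((y\<^sup>2 + \<gamma> * y - y) powr (a / 2) / (x\<^sup>2 + \<gamma> * x - x) powr ((a + 1) / 2)) \<le> B * (y powr (p/2) * x powr (-(p+1)/2))" using B(2)[OF y0 yx x] by auto
      have eq: "(if y < x then
               C * exp (C * \<bar>T_fun \<beta> \<gamma> x\<bar> powr (3/4) + C * \<bar>T_fun \<beta> \<gamma> y\<bar> powr (3/4))
                 * (sqrt (2 * y + \<gamma> - 1) / (2 * x + \<gamma> - 1) powr (-1/2))
                 * ((y\<^sup>2 + \<gamma> * y - y) powr (a / 2) / (x\<^sup>2 + \<gamma> * x - x) powr ((a + 1) / 2))
             else 0) = C * E * ((sqrt (2 * y + \<gamma> - 1) / (2 * x + \<gamma> - 1) powr (-1/2))
                 * ((y\<^sup>2 + \<gamma> * y - y) powr (a / 2) / (x\<^sup>2 + \<gamma> * x - x) powr ((a + 1) / 2)))" using yx unfolding E_def by (simp only: if_True mult.assoc)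
      have ab: "\<bar>C * E * ((sqrt (2 * y + \<gamma> - 1) / (2 * x + \<gamma> - 1) powr (-1/2))
                 * ((y\<^sup>2 + \<gamma> * y - y) powr (a / 2) / (x\<^sup>2 + \<gamma> * x - x) powr ((a + 1) / 2)))\<bar> \<le> (\<bar>C\<bar> * B) * E * (y powr (p/2) * x powr (-(p+1)/2))"
      proof -
        have "\<bar>C * E * ((sqrt (2 * y + \<gamma> - 1) / (2 * x + \<gamma> - 1) powr (-1/2))
                 * ((y\<^sup>2 + \<gamma> * y - y) powr (a / 2) / (x\<^sup>2 + \<gamma> * x - x) powr ((a + 1) / 2)))\<bar> = \<bar>C\<bar> * E * ((sqrt (2 * y + \<gamma> - 1) / (2 * x + \<gamma> - 1) powr (-1/2))
                 * ((y\<^sup>2 + \<gamma> * y - y) powr (a / 2) / (x\<^sup>2 + \<gamma> * x - x) powr ((a + 1) / 2)))" by (rule absCEF[OF E0 F(1)])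
        also have "\<dots> \<le> \<bar>C\<bar> * E * (B * (y powr (p/2) * x powr (-(p+1)/2)))"
          by (rule mult_left_mono[OF F(2)]) (use E0 in simp)
        also have "\<dots> = (\<bar>C\<bar> * B) * E * (y powr (p/2) * x powr (-(p+1)/2))" by (simp only: ac_simps)
        finally show ?thesis .
      qed
      have fin: "\<bar>C * E * ((sqrt (2 * y + \<gamma> - 1) / (2 * x + \<gamma> - 1) powr (-1/2))
                 * ((y\<^sup>2 + \<gamma> * y - y) powr (a / 2) / (x\<^sup>2 + \<gamma> * x - x) powr ((a + 1) / 2)))\<bar> \<le> ((\<bar>C\<bar> * B) * K) * (y powr (p/2 - \<delta>) * x powr (-(p+1)/2 - \<delta>))"
        by (rule combine[OF ab E0 E]) (use B(1) in simp)
      show ?thesis by (subst eq) (rule fin)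
    qed
  qed
qed simp

theorem proposition4p9:
  fixes \<beta> \<gamma> a C :: real
  assumes "\<beta> > 0" and "\<gamma> \<ge> 1" and "a > -1"
  shows "hilbert_schmidt_kernel (\<lambda>x y.
            (if y < x then
               C * exp (C * \<bar>T_fun \<beta> \<gamma> x\<bar> powr (3/4) + C * \<bar>T_fun \<beta> \<gamma> y\<bar> powr (3/4))
                 * (sqrt (2 * y + \<gamma> - 1) / (2 * x + \<gamma> - 1) powr (-1/2))
                 * ((y\<^sup>2 + \<gamma> * y - y) powr (a / 2) / (x\<^sup>2 + \<gamma> * x - x) powr ((a + 1) / 2))
             else 0))
       \<and> hilbert_schmidt_kernel (\<lambda>x y.
            (if y < x then
               C * exp (C * (ln (1 / x)) powr (3/4) + C * (ln (1 / y)) powr (3/4))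
                 * y powr (a / 2) * x powr (-(a + 1) / 2)
             else 0))"
proof (rule conjI)
  show "hilbert_schmidt_kernel (\<lambda>x y.
            (if y < x then
               C * exp (C * (ln (1 / x)) powr (3/4) + C * (ln (1 / y)) powr (3/4))
                 * y powr (a / 2) * x powr (-(a + 1) / 2)
             else 0))" by (rule kernel2[OF assms(3)])
next
  show "hilbert_schmidt_kernel (\<lambda>x y.
            (if y < x then
               C * exp (C * \<bar>T_fun \<beta> \<gamma> x\<bar> powr (3/4) + C * \<bar>T_fun \<beta> \<gamma> y\<bar> powr (3/4))
                 * (sqrt (2 * y + \<gamma> - 1) / (2 * x + \<gamma> - 1) powr (-1/2))
                 * ((y\<^sup>2 + \<gamma> * y - y) powr (a / 2) / (x\<^sup>2 + \<gamma> * x - x) powr ((a + 1) / 2))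
             else 0))"
  proof (cases "\<gamma> = 1")
    case True
    show ?thesis
    proof (rule kernel1_gen[OF assms(1,2), where p = "2*a+1"])
      show "2*a+1 > -1" using assms(3) by simp
      show "\<exists>B\<ge>0. \<forall>x y. 0 < y \<longrightarrow> y < x \<longrightarrow> x \<le> 1 \<longrightarrow> 0 \<le> (sqrt (2 * y + \<gamma> - 1) / (2 * x + \<gamma> - 1) powr (-1/2))
                 * ((y\<^sup>2 + \<gamma> * y - y) powr (a / 2) / (x\<^sup>2 + \<gamma> * x - x) powr ((a + 1) / 2)) \<and>
           (sqrt (2 * y + \<gamma> - 1) / (2 * x + \<gamma> - 1) powr (-1/2))
                 * ((y\<^sup>2 + \<gamma> * y - y) powr (a / 2) / (x\<^sup>2 + \<gamma> * x - x) powr ((a + 1) / 2))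
             \<le> B * (y powr ((2*a+1)/2) * x powr (-((2*a+1)+1)/2))"
        using Fbound_eq[OF True] by (intro exI[of _ 2]) auto
    qed
  next
    case False
    then have g: "\<gamma> > 1" using assms(2) by simp
    show ?thesis
    proof (rule kernel1_gen[OF assms(1,2), where p = a])
      show "a > -1" by (rule assms(3))
      show "\<exists>B\<ge>0. \<forall>x y. 0 < y \<longrightarrow> y < x \<longrightarrow> x \<le> 1 \<longrightarrow> 0 \<le> (sqrt (2 * y + \<gamma> - 1) / (2 * x + \<gamma> - 1) powr (-1/2))
                 * ((y\<^sup>2 + \<gamma> * y - y) powr (a / 2) / (x\<^sup>2 + \<gamma> * x - x) powr ((a + 1) / 2)) \<and>
           (sqrt (2 * y + \<gamma> - 1) / (2 * x + \<gamma> - 1) powr (-1/2))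
                 * ((y\<^sup>2 + \<gamma> * y - y) powr (a / 2) / (x\<^sup>2 + \<gamma> * x - x) powr ((a + 1) / 2))
             \<le> B * (y powr (a/2) * x powr (-(a+1)/2))"
      proof (intro exI[of _ "(1+\<gamma>) * (((\<gamma>-1) powr (a/2) + \<gamma> powr (a/2)) / (\<gamma>-1) powr ((a+1)/2))"] conjI allI impI)
        show "0 \<le> (1+\<gamma>) * (((\<gamma>-1) powr (a/2) + \<gamma> powr (a/2)) / (\<gamma>-1) powr ((a+1)/2))"
          using g by simp
      qed (use Fbound_gt[OF g assms(3)] in auto)
    qed
  qed
qed

end
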